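(* Let $\alpha>1$ and let $f:\mathbb{D}\to\mathbb{C}$ be analytic (respectively $f:\mathbb{D}\to\mathbb{D}$ analytic). For $t>0$ let $A(t)=\mathbb{A}_E(f(B_H(0,t)))$ (respectively $A(t)=\mathbb{A}_H(f(B_H(0,t)))$), where $B_H(0,t)=\{z\in\mathbb{D}:d_H(0,z)<t\}$. Suppose $\int_1^\infty A(t)\,t^{-\alpha}\,dt<\infty$. Then for every $\theta\in\mathbb{R}$, with $\gamma(t)=\tanh(\frac t2)e^{i\theta}$ and $L(\rho_0)=\int_0^{\rho_0}\|f'(\gamma(t))\|_{H\to E}\,dt$ (respectively $\int_0^{\rho_0}\|f'(\gamma(t))\|_{H\to H}\,dt$), we have $$L(\rho_0)=o(\rho_0^{\alpha/2})\quad\text{as }\rho_0\to\infty.$$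
   Context: $\mathbb{D}=\{|z|<1\}$ carries the hyperbolic metric with density $\lambda_H(z)=2/(1-|z|^2)$ and distance $d_H$; $\mathbb{C}$ carries the Euclidean metric. $\|f'(z)\|_{H\to E}=|f'(z)|/\lambda_H(z)$, $\|f'(z)\|_{H\to H}=|f'(z)|\lambda_H(f(z))/\lambda_H(z)$. For $\Omega\subseteq\mathbb{D}$, $\mathbb{A}_E(f(\Omega))=\int_\Omega|f'|^2\,dx\,dy$ and $\mathbb{A}_H(f(\Omega))=\int_\Omega|f'(z)|^2\lambda_H(f(z))^2\,dx\,dy$ (areas counting multiplicity). *)

theory Defs
  imports "HOL-Analysis.Analysis" "HOL-Library.Landau_Symbols"
begin

definition lambdaH :: "complex \<Rightarrow> real" where
  "lambdaH z = 2 / (1 - (cmod z)^2)"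

text \<open>Hyperbolic distance induced by lambda_H (curvature -1).\<close>
definition hdist :: "complex \<Rightarrow> complex \<Rightarrow> real" where
  "hdist z w = 2 * artanh (cmod ((z - w) / (1 - cnj w * z)))"

definition hball0 :: "real \<Rightarrow> complex set" where
  "hball0 t = {z \<in> ball 0 1. hdist 0 z < t}"

text \<open>Euclidean area of f(Omega), counting multiplicity.\<close>
definition areaE :: "(complex \<Rightarrow> complex) \<Rightarrow> complex set \<Rightarrow> ennreal" where
  "areaE f \<Omega> = (\<integral>\<^sup>+ z. ennreal ((cmod (deriv f z))^2) * indicator \<Omega> z \<partial>lborel)"

text \<open>Hyperbolic area of f(Omega), counting multiplicity.\<close>
definition areaH :: "(complex \<Rightarrow> complex) \<Rightarrow> complex set \<Rightarrow> ennreal" where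
  "areaH f \<Omega> = (\<integral>\<^sup>+ z. ennreal ((cmod (deriv f z))^2 * (lambdaH (f z))^2)
                        * indicator \<Omega> z \<partial>lborel)"

definition normHE :: "(complex \<Rightarrow> complex) \<Rightarrow> complex \<Rightarrow> real" where
  "normHE f z = cmod (deriv f z) / lambdaH z"

definition normHH :: "(complex \<Rightarrow> complex) \<Rightarrow> complex \<Rightarrow> real" where
  "normHH f z = cmod (deriv f z) * lambdaH (f z) / lambdaH z"

definition hray :: "real \<Rightarrow> real \<Rightarrow> complex" where
  "hray \<theta> t = complex_of_real (tanh (t / 2)) * cis \<theta>"

end

theory Submission
  imports Defs "HOL-Complex_Analysis.Complex_Analysis"
begin

lemma meas_Complex: "(\<lambda>p. Complex (fst p) (snd p)) \<in> borel_measurable (lborel \<Otimes>\<^sub>M (lborel::real measure))"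
proof -
  have "(\<lambda>p. Complex (fst p) (snd p)) = (\<lambda>p. complex_of_real (fst p) + \<i> * complex_of_real (snd p))"
    by (simp add: Complex_eq)
  also have "\<dots> \<in> borel_measurable (lborel \<Otimes>\<^sub>M (lborel::real measure))"
    by measurable
  finally show ?thesis .
qed

lemma lborel_complex_eq:
  "(lborel :: complex measure) = distr (lborel \<Otimes>\<^sub>M lborel) borel (\<lambda>(x,y). Complex x y)"
proof (rule lborel_eqI)
  have meas: "(\<lambda>(x,y). Complex x y) \<in> borel_measurable (lborel \<Otimes>\<^sub>M (lborel::real measure))"
    unfolding case_prod_unfold by (rule meas_Complex)
  fix l u :: complex
  assume le: "\<And>b. b \<in> Basis \<Longrightarrow> l \<bullet> b \<le> u \<bullet> b"
  then have le1: "Re l \<le> Re u" and le2: "Im l \<le> Im u"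
    using le[of 1] le[of \<i>] by (auto simp: Basis_complex_def)
  have pre: "(\<lambda>(x,y). Complex x y) -` box l u \<inter> space (lborel \<Otimes>\<^sub>M lborel) = {Re l<..<Re u} \<times> {Im l<..<Im u}"
    by (auto simp: in_box_complex_iff space_pair_measure)
  show "emeasure (distr (lborel \<Otimes>\<^sub>M lborel) borel (\<lambda>(x,y). Complex x y)) (box l u) = (\<Prod>b\<in>Basis. (u - l) \<bullet> b)"
    using le1 le2
    by (subst emeasure_distr[OF meas]) (auto simp: pre lborel.emeasure_pair_measure_Times Basis_complex_def ennreal_mult inner_complex_def)
qed simp

lemma nn_integral_complex_xy:
  fixes F :: "complex \<Rightarrow> ennreal"
  assumes [measurable]: "F \<in> borel_measurable borel"
  shows "(\<integral>\<^sup>+ z. F z \<partial>lborel) = (\<integral>\<^sup>+ x. \<integral>\<^sup>+ y. F (Complex x y) \<partial>lborel \<partial>lborel)"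
proof -
  have meas: "(\<lambda>(x,y). Complex x y) \<in> (lborel \<Otimes>\<^sub>M (lborel::real measure)) \<rightarrow>\<^sub>M borel"
    unfolding case_prod_unfold by (rule meas_Complex)
  have "(\<integral>\<^sup>+ z. F z \<partial>lborel) = (\<integral>\<^sup>+ p. F (case p of (x,y) \<Rightarrow> Complex x y) \<partial>(lborel \<Otimes>\<^sub>M lborel))"
    by (subst lborel_complex_eq) (simp add: nn_integral_distr[OF meas])
  also have "\<dots> = (\<integral>\<^sup>+ x. \<integral>\<^sup>+ y. F (Complex x y) \<partial>lborel \<partial>lborel)"
    by (subst lborel.nn_integral_fst[symmetric]) (auto intro: measurable_compose[OF meas])
  finally show ?thesis .
qed

lemma nn_integral_complex_yx:
  fixes F :: "complex \<Rightarrow> ennreal"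
  assumes [measurable]: "F \<in> borel_measurable borel"
  shows "(\<integral>\<^sup>+ z. F z \<partial>lborel) = (\<integral>\<^sup>+ y. \<integral>\<^sup>+ x. F (Complex x y) \<partial>lborel \<partial>lborel)"
proof -
  have meas: "(\<lambda>(x,y). Complex x y) \<in> (lborel \<Otimes>\<^sub>M (lborel::real measure)) \<rightarrow>\<^sub>M borel"
    unfolding case_prod_unfold by (rule meas_Complex)
  have "(\<integral>\<^sup>+ y. \<integral>\<^sup>+ x. F (Complex x y) \<partial>lborel \<partial>lborel) = (\<integral>\<^sup>+ x. \<integral>\<^sup>+ y. F (Complex x y) \<partial>lborel \<partial>lborel)"
  proof (rule lborel_pair.Fubini')
    have "(\<lambda>p. F (Complex (fst p) (snd p))) \<in> borel_measurable (lborel \<Otimes>\<^sub>M lborel)"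
      by (rule measurable_compose[OF meas_Complex]) simp
    then show "(\<lambda>(x, y). F (Complex x y)) \<in> borel_measurable (lborel \<Otimes>\<^sub>M lborel)"
      by (simp add: case_prod_unfold)
  qed
  then show ?thesis using nn_integral_complex_xy[OF assms] by simp
qed



lemma linepath_bound_param:
  fixes g :: "complex \<Rightarrow> complex" and \<phi> :: "real \<Rightarrow> complex"
  assumes u12: "u1 < u2" and lp: "\<And>t. linepath a b t = \<phi> (u2 * t + u1 * (1 - t))"
    and nb: "cmod (b - a) = u2 - u1"
    and cont: "continuous_on {u1..u2} (\<lambda>u. g (\<phi> u))"
  shows "ennreal (cmod (contour_integral (linepath a b) g))
          \<le> (\<integral>\<^sup>+ u. ennreal (cmod (g (\<phi> u))) * indicator {u1..u2} u \<partial>lborel)"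
proof -
  define m where "m = u2 - u1"
  have m: "m > 0" using u12 by (simp add: m_def)
  define xi where "xi u = cmod (g (\<phi> u))" for u
  have contx: "continuous_on {u1..u2} xi"
    unfolding xi_def by (intro continuous_intros cont)
  have aff: "\<And>t. u2 * t + u1 * (1 - t) = m * t + u1" by (simp add: m_def algebra_simps)
  have img: "(\<lambda>t. m * t + u1) ` {0..1} \<subseteq> {u1..u2}"
  proof
    fix y assume "y \<in> (\<lambda>t. m * t + u1) ` {0..1}"
    then obtain t where t: "0 \<le> t" "t \<le> 1" "y = m * t + u1" by auto
    have "m * t \<le> m" using mult_left_le[of t m] t m by simp
    moreover have "0 \<le> m * t" using t m by simp
    ultimately show "y \<in> {u1..u2}" using t(3) by (simp add: m_def)
  qed
  have contaff: "continuous_on {0..1} (\<lambda>t::real. m * t + u1)" by (intro continuous_intros)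
  have c1: "continuous_on {0..1} (\<lambda>t. g (linepath a b t))"
    unfolding lp aff
    by (rule continuous_on_compose2[OF cont contaff img])
  have c2: "continuous_on {0..1} (\<lambda>t. xi (m * t + u1))"
    by (rule continuous_on_compose2[OF contx contaff img])
  have "contour_integral (linepath a b) g = integral {0..1} (\<lambda>t. g (linepath a b t) * (b - a))"
    by (simp add: contour_integral_integral)
  also have "cmod \<dots> \<le> integral {0..1} (\<lambda>t. xi (m * t + u1) * m)"
  proof (rule integral_norm_bound_integral)
    show "(\<lambda>t. g (linepath a b t) * (b - a)) integrable_on {0..1}"
      by (intro integrable_continuous_interval continuous_intros c1)
    show "(\<lambda>t. xi (m * t + u1) * m) integrable_on {0..1}"
      by (intro integrable_continuous_interval continuous_intros c2)
    show "cmod (g (linepath a b t) * (b - a)) \<le> xi (m * t + u1) * m" if "t \<in> {0..1}" for t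
      by (simp add: lp aff xi_def norm_mult nb m_def)
  qed
  finally have le1: "cmod (contour_integral (linepath a b) g) \<le> integral {0..1} (\<lambda>t. xi (m * t + u1) * m)" .
  have hi: "(xi has_integral integral {u1..u2} xi) (cbox u1 u2)"
    using integrable_continuous_interval[OF contx] by (simp add: integrable_integral)
  have "((\<lambda>x. xi (m *\<^sub>R x + u1)) has_integral (integral {u1..u2} xi /\<^sub>R m ^ DIM(real)))
           (cbox ((u1 - u1) /\<^sub>R m) ((u2 - u1) /\<^sub>R m))"
    by (rule has_integral_affinity'[OF hi m])
  then have "((\<lambda>x. xi (m * x + u1)) has_integral (integral {u1..u2} xi / m)) {0..1}"
    using m by (simp add: m_def divide_simps)
  then have "((\<lambda>x. xi (m * x + u1) * m) has_integral (integral {u1..u2} xi)) {0..1}"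
    using has_integral_mult_left[of _ _ "{0..1}" m] m by fastforce
  then have eq: "integral {0..1} (\<lambda>t. xi (m * t + u1) * m) = integral {u1..u2} xi"
    by (rule integral_unique)
  have "(\<integral>\<^sup>+ u. ennreal (indicator {u1..u2} u * xi u) \<partial>lborel) = ennreal (integral {u1..u2} xi)"
    by (rule nn_integral_has_integral_lebesgue[OF _ hi[unfolded cbox_interval]]) (simp add: xi_def)
  moreover have "(\<integral>\<^sup>+ u. ennreal (indicator {u1..u2} u * xi u) \<partial>lborel)
      = (\<integral>\<^sup>+ u. ennreal (cmod (g (\<phi> u))) * indicator {u1..u2} u \<partial>lborel)"
    by (intro nn_integral_cong) (auto simp: xi_def indicator_def)
  ultimately show ?thesis using le1 eq by (metis ennreal_leI)
qed



lemma side_bound: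
  fixes H :: "complex \<Rightarrow> complex" and \<phi> :: "real \<Rightarrow> complex"
  assumes u12: "ua < ub" and lp: "\<And>t. linepath a b t = \<phi> (ub * t + ua * (1 - t))"
    and nb: "cmod (b - a) = ub - ua"
    and phic: "continuous_on UNIV \<phi>"
    and Hc: "continuous_on S H"
    and img: "\<phi> ` {ua..ub} \<subseteq> S"
    and sig: "\<sigma> > 0" and far: "\<And>u. u \<in> {ua..ub} \<Longrightarrow> \<sigma> \<le> cmod (\<phi> u - c)"
    and Fm: "(\<lambda>z. ennreal (cmod (H z)) * indicator S z) \<in> borel_measurable borel"
  shows "ennreal (cmod (contour_integral (linepath a b) (\<lambda>w. H w / (w - c))))
          \<le> ennreal (1 / \<sigma>) * (\<integral>\<^sup>+ u. ennreal (cmod (H (\<phi> u))) * indicator S (\<phi> u) \<partial>lborel)"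
proof -
  have ne: "\<phi> u - c \<noteq> 0" if "u \<in> {ua..ub}" for u
    using far[OF that] sig by auto
  have cont: "continuous_on {ua..ub} (\<lambda>u. H (\<phi> u) / (\<phi> u - c))"
  proof (intro continuous_intros)
    show "continuous_on {ua..ub} (\<lambda>u. H (\<phi> u))"
      by (rule continuous_on_compose2[OF Hc continuous_on_subset[OF phic] img]) auto
    show "continuous_on {ua..ub} \<phi>" by (rule continuous_on_subset[OF phic]) auto
  qed (use ne in auto)
  have "ennreal (cmod (contour_integral (linepath a b) (\<lambda>w. H w / (w - c))))
        \<le> (\<integral>\<^sup>+ u. ennreal (cmod (H (\<phi> u) / (\<phi> u - c))) * indicator {ua..ub} u \<partial>lborel)"
    by (rule linepath_bound_param[OF u12 lp nb cont])
  also have "\<dots> \<le> (\<integral>\<^sup>+ u. ennreal (1 / \<sigma>) * (ennreal (cmod (H (\<phi> u))) * indicator S (\<phi> u)) \<partial>lborel)"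
  proof (rule nn_integral_mono)
    fix u :: real
    show "ennreal (cmod (H (\<phi> u) / (\<phi> u - c))) * indicator {ua..ub} u
          \<le> ennreal (1 / \<sigma>) * (ennreal (cmod (H (\<phi> u))) * indicator S (\<phi> u))"
    proof (cases "u \<in> {ua..ub}")
      case True
      then have inS: "\<phi> u \<in> S" using img by auto
      have "cmod (H (\<phi> u) / (\<phi> u - c)) = cmod (H (\<phi> u)) / cmod (\<phi> u - c)"
        by (simp add: norm_divide)
      also have "\<dots> \<le> cmod (H (\<phi> u)) / \<sigma>"
        by (rule divide_left_mono[OF far[OF True]]) (use sig far[OF True] in \<open>auto intro!: mult_pos_pos\<close>)
      finally have "cmod (H (\<phi> u) / (\<phi> u - c)) \<le> (1 / \<sigma>) * cmod (H (\<phi> u))" by simp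
      then show ?thesis using True inS sig
        by (simp add: ennreal_mult'[symmetric] ennreal_leI)
    qed simp
  qed
  also have "\<dots> = ennreal (1 / \<sigma>) * (\<integral>\<^sup>+ u. ennreal (cmod (H (\<phi> u))) * indicator S (\<phi> u) \<partial>lborel)"
  proof (rule nn_integral_cmult)
    have "(\<lambda>u. (\<lambda>z. ennreal (cmod (H z)) * indicator S z) (\<phi> u)) \<in> borel_measurable lborel"
      by (rule measurable_compose[OF _ Fm]) (simp add: borel_measurable_continuous_onI[OF phic])
    then show "(\<lambda>u. ennreal (cmod (H (\<phi> u))) * indicator S (\<phi> u)) \<in> borel_measurable lborel" by simp
  qed
  finally show ?thesis .
qed



lemma meas_Complex_swap: "(\<lambda>p. Complex (snd p) (fst p)) \<in> borel_measurable (lborel \<Otimes>\<^sub>M (lborel::real measure))"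
proof -
  have "(\<lambda>p. Complex (snd p) (fst p)) = (\<lambda>p. complex_of_real (snd p) + \<i> * complex_of_real (fst p))"
    by (simp add: Complex_eq)
  also have "\<dots> \<in> borel_measurable (lborel \<Otimes>\<^sub>M (lborel::real measure))"
    by measurable
  finally show ?thesis .
qed

lemma meas_Px:
  fixes F :: "complex \<Rightarrow> ennreal"
  assumes [measurable]: "F \<in> borel_measurable borel"
  shows "(\<lambda>x. \<integral>\<^sup>+ y. F (Complex x y) \<partial>lborel) \<in> borel_measurable lborel"
proof (rule lborel.borel_measurable_nn_integral)
  have "(\<lambda>p. F (Complex (fst p) (snd p))) \<in> borel_measurable (lborel \<Otimes>\<^sub>M lborel)"
    by (rule measurable_compose[OF meas_Complex]) simp
  then show "(\<lambda>(x, y). F (Complex x y)) \<in> borel_measurable (lborel \<Otimes>\<^sub>M lborel)"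
    by (simp add: case_prod_unfold)
qed

lemma meas_Py:
  fixes F :: "complex \<Rightarrow> ennreal"
  assumes [measurable]: "F \<in> borel_measurable borel"
  shows "(\<lambda>y. \<integral>\<^sup>+ x. F (Complex x y) \<partial>lborel) \<in> borel_measurable lborel"
proof (rule lborel.borel_measurable_nn_integral)
  have "(\<lambda>p. F (Complex (snd p) (fst p))) \<in> borel_measurable (lborel \<Otimes>\<^sub>M lborel)"
    by (rule measurable_compose[OF meas_Complex_swap]) simp
  then show "(\<lambda>(y, x). F (Complex x y)) \<in> borel_measurable (lborel \<Otimes>\<^sub>M lborel)"
    by (simp add: case_prod_unfold)
qed

lemma shift_integral:
  fixes P :: "real \<Rightarrow> ennreal"
  assumes [measurable]: "P \<in> borel_measurable borel"
  shows "(\<integral>\<^sup>+ s. P (a + s) \<partial>lborel) = integral\<^sup>N lborel P"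
    and "(\<integral>\<^sup>+ s. P (a - s) \<partial>lborel) = integral\<^sup>N lborel P"
  using nn_integral_real_affine[of P 1 a] nn_integral_real_affine[of P "-1" a] by simp_all

lemma cmod_horiz: "cmod (Complex x y - Complex x' y) = \<bar>x - x'\<bar>"
  by (simp add: cmod_def)

lemma cmod_vert: "cmod (Complex x y - Complex x y') = \<bar>y - y'\<bar>"
  by (simp add: cmod_def)

lemma far_Im: "\<sigma> \<le> \<bar>Im z - Im c\<bar> \<Longrightarrow> \<sigma> \<le> cmod (z - c)"
  using abs_Im_le_cmod[of "z - c"] by simp

lemma far_Re: "\<sigma> \<le> \<bar>Re z - Re c\<bar> \<Longrightarrow> \<sigma> \<le> cmod (z - c)"
  using abs_Re_le_cmod[of "z - c"] by simp

lemma rect_step: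
  fixes H :: "complex \<Rightarrow> complex"
  assumes holo: "H holomorphic_on S" and S_def: "S = cbox (c - Complex r r) (c + Complex r r)"
    and sig: "0 < \<sigma>" "\<sigma> \<le> r"
    and Fm: "(\<lambda>z. ennreal (cmod (H z)) * indicator S z) \<in> borel_measurable borel"
  defines "Fm \<equiv> (\<lambda>z. ennreal (cmod (H z)) * indicator S z)"
  shows "ennreal (2 * pi * cmod (H c)) \<le> ennreal (1 / \<sigma>) *
     ((\<integral>\<^sup>+ x. Fm (Complex x (Im c - \<sigma>)) \<partial>lborel) + (\<integral>\<^sup>+ y. Fm (Complex (Re c + \<sigma>) y) \<partial>lborel)
      + (\<integral>\<^sup>+ x. Fm (Complex x (Im c + \<sigma>)) \<partial>lborel) + (\<integral>\<^sup>+ y. Fm (Complex (Re c - \<sigma>) y) \<partial>lborel))"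
proof -
  have Hc: "continuous_on S H" using holo holomorphic_on_imp_continuous_on by blast
  define a1 where "a1 = c - Complex \<sigma> \<sigma>"
  define a3 where "a3 = c + Complex \<sigma> \<sigma>"
  define a2 where "a2 = Complex (Re a3) (Im a1)"
  define a4 where "a4 = Complex (Re a1) (Im a3)"
  define g where "g w = H w / (w - c)" for w
  have sub: "cbox a1 a3 \<subseteq> S"
    using sig by (auto simp: S_def a1_def a3_def in_cbox_complex_iff)
  have le13: "Re a1 \<le> Re a3" "Im a1 \<le> Im a3" using sig by (auto simp: a1_def a3_def)
  have cbox_in: "c \<in> box a1 a3" using sig by (auto simp: a1_def a3_def in_box_complex_iff)
  have pim: "path_image (rectpath a1 a3) = cbox a1 a3 - box a1 a3"
    by (rule path_image_rectpath_cbox_minus_box[OF le13])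
  have "(g has_contour_integral (2*pi * \<i> * winding_number (rectpath a1 a3) c * H c)) (rectpath a1 a3)"
    unfolding g_def
  proof (rule Cauchy_integral_formula_convex_simple)
    show "convex (cbox a1 a3)" by (rule convex_box)
    show "H holomorphic_on cbox a1 a3" by (rule holomorphic_on_subset[OF holo sub])
    show "c \<in> interior (cbox a1 a3)" using cbox_in by simp
    show "path_image (rectpath a1 a3) \<subseteq> cbox a1 a3 - {c}" using pim cbox_in by auto
  qed auto
  then have cauchy: "(g has_contour_integral (2*pi * \<i> * H c)) (rectpath a1 a3)"
    using winding_number_rectpath[OF cbox_in] by simp
  have pim2: "path_image (rectpath a1 a3) = closed_segment a1 a2 \<union> closed_segment a2 a3 \<union> closed_segment a3 a4 \<union> closed_segment a4 a1"
    by (simp add: rectpath_def Let_def path_image_join a2_def a4_def Un_assoc)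
  have gcont: "continuous_on (path_image (rectpath a1 a3)) g"
    unfolding g_def
  proof (intro continuous_intros)
    show "continuous_on (path_image (rectpath a1 a3)) H"
      by (rule continuous_on_subset[OF Hc]) (use pim sub in auto)
  qed (use pim cbox_in in auto)
  have ci: "(g has_contour_integral contour_integral (linepath p q) g) (linepath p q)"
    if "closed_segment p q \<subseteq> path_image (rectpath a1 a3)" for p q
    by (intro has_contour_integral_integral contour_integrable_continuous_linepath continuous_on_subset[OF gcont that])
  have i1: "(g has_contour_integral contour_integral (linepath a1 a2) g) (linepath a1 a2)"
    by (rule ci) (auto simp: pim2)
  have i2: "(g has_contour_integral contour_integral (linepath a2 a3) g) (linepath a2 a3)"
    by (rule ci) (auto simp: pim2)
  have i3: "(g has_contour_integral contour_integral (linepath a3 a4) g) (linepath a3 a4)"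
    by (rule ci) (auto simp: pim2)
  have i4: "(g has_contour_integral contour_integral (linepath a4 a1) g) (linepath a4 a1)"
    by (rule ci) (auto simp: pim2)
  have "(g has_contour_integral (contour_integral (linepath a1 a2) g + (contour_integral (linepath a2 a3) g
        + (contour_integral (linepath a3 a4) g + contour_integral (linepath a4 a1) g)))) (rectpath a1 a3)"
    unfolding rectpath_def Let_def a2_def[symmetric] a4_def[symmetric]
    by (intro has_contour_integral_join i1 i2 i3 i4 valid_path_join) auto
  then have sum_eq: "contour_integral (linepath a1 a2) g + (contour_integral (linepath a2 a3) g
        + (contour_integral (linepath a3 a4) g + contour_integral (linepath a4 a1) g)) = 2*pi * \<i> * H c"
    using cauchy has_contour_integral_unique by blast
  have rev3: "contour_integral (linepath a3 a4) g = - contour_integral (linepath a4 a3) g"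
    using contour_integral_reversepath[of "linepath a4 a3" g] by simp
  have rev4: "contour_integral (linepath a4 a1) g = - contour_integral (linepath a1 a4) g"
    using contour_integral_reversepath[of "linepath a1 a4" g] by simp
  have "2 * pi * cmod (H c) = cmod (2*pi * \<i> * H c)"
    by (simp add: norm_mult)
  also have "\<dots> \<le> cmod (contour_integral (linepath a1 a2) g) + cmod (contour_integral (linepath a2 a3) g)
        + cmod (contour_integral (linepath a4 a3) g) + cmod (contour_integral (linepath a1 a4) g)"
    unfolding sum_eq[symmetric] rev3 rev4
    by (smt (verit) norm_minus_cancel norm_triangle_ineq)
  finally have tri: "2 * pi * cmod (H c) \<le> cmod (contour_integral (linepath a1 a2) g) + cmod (contour_integral (linepath a2 a3) g)
        + cmod (contour_integral (linepath a4 a3) g) + cmod (contour_integral (linepath a1 a4) g)" .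
  have HcS: "continuous_on S H" by (rule Hc)
  have A1: "a1 = Complex (Re c - \<sigma>) (Im c - \<sigma>)" by (simp add: a1_def complex_eq_iff)
  have A2: "a2 = Complex (Re c + \<sigma>) (Im c - \<sigma>)" by (simp add: a2_def a1_def a3_def complex_eq_iff)
  have A3: "a3 = Complex (Re c + \<sigma>) (Im c + \<sigma>)" by (simp add: a3_def complex_eq_iff)
  have A4: "a4 = Complex (Re c - \<sigma>) (Im c + \<sigma>)" by (simp add: a4_def a1_def a3_def complex_eq_iff)
  have b1: "ennreal (cmod (contour_integral (linepath a1 a2) g)) \<le> ennreal (1 / \<sigma>) * (\<integral>\<^sup>+ x. Fm (Complex x (Im c - \<sigma>)) \<partial>lborel)"
    unfolding g_def Fm_def
    by (rule side_bound[where ua = "Re c - \<sigma>" and ub = "Re c + \<sigma>" and \<phi> = "\<lambda>u. Complex u (Im c - \<sigma>)", OF _ _ _ _ HcS _ sig(1) _ Fm])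
       (use sig in \<open>auto simp: linepath_def complex_eq_iff A1 A2 algebra_simps S_def in_cbox_complex_iff cmod_horiz
              intro!: continuous_intros far_Im\<close>)
  have b2: "ennreal (cmod (contour_integral (linepath a2 a3) g)) \<le> ennreal (1 / \<sigma>) * (\<integral>\<^sup>+ y. Fm (Complex (Re c + \<sigma>) y) \<partial>lborel)"
    unfolding g_def Fm_def
    by (rule side_bound[where ua = "Im c - \<sigma>" and ub = "Im c + \<sigma>" and \<phi> = "\<lambda>u. Complex (Re c + \<sigma>) u", OF _ _ _ _ HcS _ sig(1) _ Fm])
       (use sig in \<open>auto simp: linepath_def complex_eq_iff A3 A2 algebra_simps S_def in_cbox_complex_iff cmod_vert
              intro!: continuous_intros far_Re\<close>)
  have b3: "ennreal (cmod (contour_integral (linepath a4 a3) g)) \<le> ennreal (1 / \<sigma>) * (\<integral>\<^sup>+ x. Fm (Complex x (Im c + \<sigma>)) \<partial>lborel)"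
    unfolding g_def Fm_def
    by (rule side_bound[where ua = "Re c - \<sigma>" and ub = "Re c + \<sigma>" and \<phi> = "\<lambda>u. Complex u (Im c + \<sigma>)", OF _ _ _ _ HcS _ sig(1) _ Fm])
       (use sig in \<open>auto simp: linepath_def complex_eq_iff A3 A4 algebra_simps S_def in_cbox_complex_iff cmod_horiz
              intro!: continuous_intros far_Im\<close>)
  have b4: "ennreal (cmod (contour_integral (linepath a1 a4) g)) \<le> ennreal (1 / \<sigma>) * (\<integral>\<^sup>+ y. Fm (Complex (Re c - \<sigma>) y) \<partial>lborel)"
    unfolding g_def Fm_def
    by (rule side_bound[where ua = "Im c - \<sigma>" and ub = "Im c + \<sigma>" and \<phi> = "\<lambda>u. Complex (Re c - \<sigma>) u", OF _ _ _ _ HcS _ sig(1) _ Fm])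
       (use sig in \<open>auto simp: linepath_def complex_eq_iff A1 A4 algebra_simps S_def in_cbox_complex_iff cmod_vert
              intro!: continuous_intros far_Re\<close>)
  have "ennreal (2 * pi * cmod (H c)) \<le> ennreal (cmod (contour_integral (linepath a1 a2) g)) + ennreal (cmod (contour_integral (linepath a2 a3) g))
        + ennreal (cmod (contour_integral (linepath a4 a3) g)) + ennreal (cmod (contour_integral (linepath a1 a4) g))"
    using tri by (simp add: ennreal_plus[symmetric] del: ennreal_plus)
  also have "\<dots> \<le> ennreal (1 / \<sigma>) * (\<integral>\<^sup>+ x. Fm (Complex x (Im c - \<sigma>)) \<partial>lborel) + ennreal (1 / \<sigma>) * (\<integral>\<^sup>+ y. Fm (Complex (Re c + \<sigma>) y) \<partial>lborel)
      + ennreal (1 / \<sigma>) * (\<integral>\<^sup>+ x. Fm (Complex x (Im c + \<sigma>)) \<partial>lborel) + ennreal (1 / \<sigma>) * (\<integral>\<^sup>+ y. Fm (Complex (Re c - \<sigma>) y) \<partial>lborel)"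
    by (intro add_mono b1 b2 b3 b4)
  finally show ?thesis by (simp add: distrib_left)
qed



lemma core1:
  fixes H :: "complex \<Rightarrow> complex"
  assumes holo: "H holomorphic_on S" and S_def: "S = cbox (c - Complex r r) (c + Complex r r)" and r: "r > 0"
  shows "ennreal (cmod (H c) * r^2) \<le> 3 * (\<integral>\<^sup>+ z. ennreal (cmod (H z)) * indicator S z \<partial>lborel)"
proof -
  have Hc: "continuous_on S H" using holo holomorphic_on_imp_continuous_on by blast
  define Fm where "Fm = (\<lambda>z. ennreal (cmod (H z)) * indicator S z)"
  have Sb: "S \<in> sets borel" unfolding S_def by (simp add: borel_closed)
  have m1: "(\<lambda>z. indicator S z *\<^sub>R H z) \<in> borel_measurable borel"
    by (rule borel_measurable_continuous_on_indicator[OF Sb Hc])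
  have e: "Fm = (\<lambda>z. ennreal (cmod (indicator S z *\<^sub>R H z)))"
    by (rule ext) (simp add: Fm_def indicator_def)
  have Fmm [measurable]: "Fm \<in> borel_measurable borel"
    unfolding e using m1 by measurable
  define Q where "Q = integral\<^sup>N lborel Fm"
  define Px where "Px x = (\<integral>\<^sup>+ y. Fm (Complex x y) \<partial>lborel)" for x
  define Py where "Py y = (\<integral>\<^sup>+ x. Fm (Complex x y) \<partial>lborel)" for y
  have Pxm [measurable]: "Px \<in> borel_measurable borel"
    using meas_Px[OF Fmm] by (simp add: Px_def[abs_def])
  have Pym [measurable]: "Py \<in> borel_measurable borel"
    using meas_Py[OF Fmm] by (simp add: Py_def[abs_def])
  have QX: "integral\<^sup>N lborel Px = Q"
    using nn_integral_complex_xy[OF Fmm] by (simp add: Q_def Px_def[abs_def])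
  have QY: "integral\<^sup>N lborel Py = Q"
    using nn_integral_complex_yx[OF Fmm] by (simp add: Q_def Py_def[abs_def])
  have step: "ennreal (2 * pi * cmod (H c)) * indicator {r/2..r} \<sigma>
      \<le> ennreal (2 / r) * (Py (Im c - \<sigma>) + Px (Re c + \<sigma>) + Py (Im c + \<sigma>) + Px (Re c - \<sigma>))" for \<sigma>
  proof (cases "\<sigma> \<in> {r/2..r}")
    case True
    then have s: "0 < \<sigma>" "\<sigma> \<le> r" "r/2 \<le> \<sigma>" using r by auto
    have "ennreal (2 * pi * cmod (H c)) \<le> ennreal (1 / \<sigma>) * (Py (Im c - \<sigma>) + Px (Re c + \<sigma>) + Py (Im c + \<sigma>) + Px (Re c - \<sigma>))"
      using rect_step[OF holo S_def s(1,2)] Fmm unfolding Fm_def Px_def Py_def by simp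
    also have "\<dots> \<le> ennreal (2 / r) * (Py (Im c - \<sigma>) + Px (Re c + \<sigma>) + Py (Im c + \<sigma>) + Px (Re c - \<sigma>))"
    proof (rule mult_right_mono)
      show "ennreal (1 / \<sigma>) \<le> ennreal (2 / r)"
        using s r by (intro ennreal_leI) (simp add: field_simps)
    qed simp
    finally show ?thesis using True by simp
  qed simp
  have "(\<integral>\<^sup>+ \<sigma>. ennreal (2 * pi * cmod (H c)) * indicator {r/2..r} \<sigma> \<partial>lborel)
     \<le> (\<integral>\<^sup>+ \<sigma>. ennreal (2 / r) * (Py (Im c - \<sigma>) + Px (Re c + \<sigma>) + Py (Im c + \<sigma>) + Px (Re c - \<sigma>)) \<partial>lborel)"
    by (rule nn_integral_mono) (rule step)
  also have "\<dots> = ennreal (2 / r) * (Q + Q + Q + Q)"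
    by (simp add: nn_integral_cmult nn_integral_add shift_integral QX QY)
  finally have main: "ennreal (2 * pi * cmod (H c)) * ennreal (r / 2) \<le> ennreal (2 / r) * (Q + Q + Q + Q)"
    using r by (simp add: nn_integral_cmult_indicator)
  show ?thesis
  proof (cases "Q = \<infinity>")
    case True
    then show ?thesis by (simp add: Q_def Fm_def)
  next
    case False
    then obtain q where q: "Q = ennreal q" "0 \<le> q" by (cases Q) auto
    have "ennreal (2 * pi * cmod (H c) * (r / 2)) \<le> ennreal (2 / r * (4 * q))"
      using main q r by (simp add: ennreal_mult'[symmetric] ennreal_plus[symmetric] del: ennreal_plus)
    then have le: "2 * pi * cmod (H c) * (r / 2) \<le> 2 / r * (4 * q)"
      using q r by (subst (asm) ennreal_le_iff) auto
    have "cmod (H c) * r^2 \<le> 3 * q"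
    proof -
      have "pi * (cmod (H c) * r^2) \<le> 8 * q"
        using le r by (simp add: field_simps power2_eq_square)
      moreover have "3 * (cmod (H c) * r^2) \<le> pi * (cmod (H c) * r^2)"
        using pi_gt3 by (intro mult_right_mono) auto
      ultimately show ?thesis using q by linarith
    qed
    then have "ennreal (cmod (H c) * r^2) \<le> ennreal (3 * q)" by (rule ennreal_leI)
    then show ?thesis using q by (simp add: Q_def Fm_def ennreal_mult)
  qed
qed



lemma tanh_artanh_real:
  fixes x :: real assumes "-1 < x" "x < 1"
  shows "tanh (artanh x) = x"
proof -
  have p: "(1 + x) / (1 - x) > 0" using assms by simp
  have "exp (- 2 * artanh x) = inverse (exp (ln ((1 + x) / (1 - x))))"
    by (simp add: artanh_def exp_minus)
  also have "\<dots> = (1 - x) / (1 + x)" using p by simp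
  finally have e: "exp (- 2 * artanh x) = (1 - x) / (1 + x)" .
  show ?thesis unfolding tanh_real_altdef e using assms by (simp add: field_simps)
qed

lemma hdist0: "hdist 0 z = 2 * artanh (cmod z)"
  by (simp add: hdist_def)

lemma hball0_eq: "hball0 t = ball 0 (tanh (t / 2))"
proof (rule set_eqI)
  fix z :: complex
  show "z \<in> hball0 t \<longleftrightarrow> z \<in> ball 0 (tanh (t / 2))"
  proof (cases "cmod z < 1")
    case True
    have "-1 < cmod z" by (smt (verit) norm_ge_zero)
    then have "cmod z = tanh (artanh (cmod z))" using True by (simp add: tanh_artanh_real)
    then have "cmod z < tanh (t / 2) \<longleftrightarrow> artanh (cmod z) < t / 2"
      by (metis tanh_real_less_iff)
    then show ?thesis using True by (auto simp: hball0_def hdist0)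
  next
    case False
    then show ?thesis using tanh_real_lt_1[of "t/2"] by (auto simp: hball0_def)
  qed
qed

lemma cmod_hray: "t \<ge> 0 \<Longrightarrow> cmod (hray \<theta> t) = tanh (t / 2)"
  by (simp add: hray_def norm_mult)

lemma hray_in: "cmod (hray \<theta> t) < 1"
  using tanh_real_bounds[of "t/2"] by (simp add: hray_def norm_mult abs_less_iff)

lemma continuous_hray: "continuous_on UNIV (hray \<theta>)"
  unfolding hray_def by (intro continuous_intros) auto

abbreviation Sq :: "complex \<Rightarrow> real \<Rightarrow> complex set" where
  "Sq z r \<equiv> cbox (z - Complex r r) (z + Complex r r)"

lemma Sq_norm:
  assumes "w \<in> Sq z r"
  shows "cmod w \<le> cmod z + 2 * r" "cmod z - 2 * r \<le> cmod w"
proof -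
  have "\<bar>Re (w - z)\<bar> \<le> r" "\<bar>Im (w - z)\<bar> \<le> r"
    using assms by (auto simp: in_cbox_complex_iff)
  then have d: "cmod (w - z) \<le> 2 * r" using cmod_le[of "w - z"] by linarith
  show "cmod w \<le> cmod z + 2 * r" using norm_triangle_ineq2[of w z] d by simp
  show "cmod z - 2 * r \<le> cmod w" using norm_triangle_ineq2[of z w] d norm_minus_commute[of w z] by simp
qed

lemma Sq_sub_ball:
  assumes "cmod z < 1"
  shows "Sq z ((1 - cmod z) / 8) \<subseteq> ball 0 1"
proof
  fix w assume "w \<in> Sq z ((1 - cmod z) / 8)"
  from Sq_norm(1)[OF this] assms have "cmod w < 1" by (simp add: field_simps)
  then show "w \<in> ball 0 1" by simp
qed

lemma point_bound:
  fixes G :: "complex \<Rightarrow> complex"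
  assumes holo: "G holomorphic_on ball 0 1" and z: "cmod z < 1"
  shows "ennreal ((cmod (G z))^2 * (1 - (cmod z)^2)^2)
     \<le> 768 * (\<integral>\<^sup>+ w. ennreal ((cmod (G w))^2) * indicator (Sq z ((1 - cmod z) / 8)) w \<partial>lborel)"
proof -
  define r where "r = (1 - cmod z) / 8"
  have r: "r > 0" using z by (simp add: r_def)
  have hS: "(\<lambda>w. (G w)^2) holomorphic_on Sq z r"
    using holomorphic_on_subset[OF holo Sq_sub_ball[OF z]] unfolding r_def
    by (intro holomorphic_intros) 
  have c: "ennreal (cmod ((G z)^2) * r^2) \<le> 3 * (\<integral>\<^sup>+ w. ennreal (cmod ((G w)^2)) * indicator (Sq z r) w \<partial>lborel)"
    by (rule core1[OF hS refl r])
  define K where "K = ((1 - (cmod z)^2) / r)^2"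
  have K: "K \<le> 256" "0 \<le> K"
  proof -
    have "(1 - (cmod z)^2) / r = 8 * (1 + cmod z)"
      using z by (simp add: r_def field_simps power2_eq_square)
    then have "K = (8 * (1 + cmod z))^2" by (simp add: K_def)
    also have "\<dots> \<le> 16^2" using z by (intro power_mono) auto
    finally show "K \<le> 256" by simp
    show "0 \<le> K" by (simp add: K_def)
  qed
  have "(cmod (G z))^2 * (1 - (cmod z)^2)^2 = (cmod ((G z)^2) * r^2) * K"
    using r by (simp add: K_def norm_power field_simps)
  then have "ennreal ((cmod (G z))^2 * (1 - (cmod z)^2)^2) = ennreal (cmod ((G z)^2) * r^2) * ennreal K"
    using K by (simp add: ennreal_mult)
  also have "\<dots> \<le> (3 * (\<integral>\<^sup>+ w. ennreal (cmod ((G w)^2)) * indicator (Sq z r) w \<partial>lborel)) * ennreal 256"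
    by (intro mult_mono c ennreal_leI K) auto
  also have "\<dots> = 768 * (\<integral>\<^sup>+ w. ennreal ((cmod (G w))^2) * indicator (Sq z r) w \<partial>lborel)"
    by (simp add: norm_power mult_ac)
  finally show ?thesis by (simp add: r_def)
qed



lemma tanh_half: "tanh (x / 2) = 1 - 2 / (exp x + 1 :: real)"
proof -
  have "tanh (x/2) = (1 - exp (- x)) / (1 + exp (- x))"
    by (simp add: tanh_real_altdef)
  also have "\<dots> = (exp x - 1) / (exp x + 1)"
  proof -
    define E where "E = exp x"
    have E0: "E > 0" by (simp add: E_def)
    then have E: "E > 0" "E + 1 \<noteq> 0" "E \<noteq> 0" by linarith+
    have "(1 - 1 / E) = (E - 1) / E" "(1 + 1 / E) = (E + 1) / E" using E by (simp_all add: field_simps)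
    then have "(1 - 1 / E) / (1 + 1 / E) = (E - 1) / (E + 1)"
      using E by simp
    then show ?thesis by (simp add: E_def exp_minus inverse_eq_divide)
  qed
  also have "\<dots> = 1 - 2 / (exp x + 1)"
  proof -
    have "exp x > 0" by simp
    then have "exp x + 1 \<noteq> 0" by linarith
    then show ?thesis by (simp add: field_simps)
  qed
  finally show ?thesis .
qed

lemma exp1_ge2: "exp (1::real) \<ge> 2"
  using exp_ge_add_one_self[of 1] by simp

lemma lin_aux1: "b < 3/4*a \<Longrightarrow> 1 - a + (1 - (1 - a))/4 < 1 - (b::real)" by (simp add: field_simps)
lemma lin_aux3: "5/4*a \<le> c \<Longrightarrow> 1 - c \<le> 1 - a - (1 - (1 - a))/(4::real)" by (simp add: field_simps)

lemma tanh_step_up: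
  fixes t :: real
  assumes t: "t \<ge> 0"
  shows "tanh (t / 2) + (1 - tanh (t / 2)) / 4 < tanh ((t + 1) / 2)"
proof -
  define E where "E = exp t"
  define q where "q = exp (1::real)"
  have E: "E \<ge> 1" using t exp_ge_add_one_self[of t] by (simp add: E_def)
  have q: "q \<ge> 2" using exp1_ge2 by (simp add: q_def)
  have e1: "exp (t + 1) = E * q" by (simp add: E_def q_def exp_add)
  have "4 * E + 1 < 3 * q * E"
  proof -
    have "6 * E \<le> 3 * q * E" using q E by (intro mult_right_mono) auto
    then show ?thesis using E by linarith
  qed
  then have "2 / (E * q + 1) < 3 / 4 * (2 / (E + 1))"
    using E q by (simp add: field_simps)
  then show ?thesis unfolding tanh_half e1 E_def[symmetric] by (rule lin_aux1)
qed

lemma tanh_step_down: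
  fixes t :: real
  assumes t: "t \<ge> 0"
  shows "tanh ((t - 1) / 2) \<le> tanh (t / 2) - (1 - tanh (t / 2)) / 4"
proof -
  define E where "E = exp t"
  define q where "q = exp (1::real)"
  have E: "E \<ge> 1" using t exp_ge_add_one_self[of t] by (simp add: E_def)
  have q: "q \<ge> 2" using exp1_ge2 by (simp add: q_def)
  have e1: "exp (t - 1) = E / q" by (simp add: E_def q_def exp_diff)
  have "E / q \<le> E / 2" using q E by (intro divide_left_mono) auto
  then have "5 * (E / q + 1) \<le> 4 * (E + 1)" using E by (simp add: field_simps)
  then have "5 / 4 * (2 / (E + 1)) \<le> 2 / (E / q + 1)"
    using E q by (simp add: field_simps)
  then show ?thesis unfolding tanh_half e1 E_def[symmetric] by (rule lin_aux3)
qed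

definition Rk :: "nat \<Rightarrow> complex set" where
  "Rk k = {w. tanh ((real k - 1) / 2) \<le> cmod w \<and> cmod w < tanh ((real k + 2) / 2)}"

lemma Sq_in_Rk:
  assumes t: "real k \<le> t" "t \<le> real k + 1"
  shows "Sq (hray \<theta> t) ((1 - cmod (hray \<theta> t)) / 8) \<subseteq> Rk k"
proof
  fix w assume w: "w \<in> Sq (hray \<theta> t) ((1 - cmod (hray \<theta> t)) / 8)"
  have t0: "t \<ge> 0" using t by simp
  define s where "s = tanh (t / 2)"
  have cs: "cmod (hray \<theta> t) = s" using cmod_hray[OF t0] by (simp add: s_def)
  have up: "cmod w \<le> s + (1 - s) / 4" using Sq_norm(1)[OF w] cs by (simp add: field_simps)
  have dn: "s - (1 - s) / 4 \<le> cmod w" using Sq_norm(2)[OF w] cs by (simp add: field_simps)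
  have "cmod w < tanh ((t + 1) / 2)" using up tanh_step_up[OF t0] by (simp add: s_def)
  also have "\<dots> \<le> tanh ((real k + 2) / 2)" using t by simp
  finally have 1: "cmod w < tanh ((real k + 2) / 2)" .
  have "tanh ((real k - 1) / 2) \<le> tanh ((t - 1) / 2)" using t by simp
  also have "\<dots> \<le> cmod w" using dn tanh_step_down[OF t0] by (simp add: s_def)
  finally show "w \<in> Rk k" using 1 by (simp add: Rk_def)
qed

lemma Rk_sub:
  assumes "k < n" shows "Rk k \<subseteq> ball 0 (tanh ((real n + 1) / 2))"
proof
  fix x assume "x \<in> Rk k"
  then have "cmod x < tanh ((real k + 2) / 2)" by (simp add: Rk_def)
  also have "\<dots> \<le> tanh ((real n + 1) / 2)" using assms by simp
  finally show "x \<in> ball 0 (tanh ((real n + 1) / 2))" by simp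
qed

lemma Rk_count:
  "(\<Sum>k<n. indicator (Rk k) w) \<le> (3::real) * indicator (ball 0 (tanh ((real n + 1) / 2))) w"
proof -
  define K where "K = {..<n} \<inter> {k. w \<in> Rk k}"
  have fin: "finite K" by (simp add: K_def)
  have sum: "(\<Sum>k<n. indicator (Rk k) w) = real (card K)"
    by (simp add: K_def indicator_def sum.If_cases)
  show ?thesis
  proof (cases "K = {}")
    case True then show ?thesis by (simp add: sum)
  next
    case False
    define m where "m = Min K"
    have mK: "m \<in> K" using False fin by (simp add: m_def)
    have "K \<subseteq> {m..m+2}"
    proof
      fix k assume k: "k \<in> K"
      have "m \<le> k" using k fin by (simp add: m_def)
      moreover have "k \<le> m + 2"
      proof (rule ccontr)
        assume "\<not> k \<le> m + 2"
        then have "real m + 2 \<le> real k - 1" by simp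
        then have "tanh ((real m + 2) / 2) \<le> tanh ((real k - 1) / 2)" by simp
        moreover have "tanh ((real k - 1) / 2) \<le> cmod w" using k by (simp add: K_def Rk_def)
        moreover have "cmod w < tanh ((real m + 2) / 2)" using mK by (simp add: K_def Rk_def)
        ultimately show False by linarith
      qed
      ultimately show "k \<in> {m..m+2}" by simp
    qed
    then have "card K \<le> card {m..m+2}" by (intro card_mono) auto
    then have c3: "card K \<le> 3" by simp
    have "w \<in> ball 0 (tanh ((real n + 1) / 2))" using mK Rk_sub[of m n] by (auto simp: K_def)
    then show ?thesis using c3 by (simp add: sum)
  qed
qed



lemma tanh_measurable [measurable]: "(tanh :: real \<Rightarrow> real) \<in> borel_measurable borel"
  by (rule borel_measurable_continuous_onI) (intro continuous_intros, auto)

locale gen =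
  fixes Psi nu :: "complex \<Rightarrow> real" and \<alpha> C :: real
  assumes alpha: "\<alpha> > 1" and C: "C \<ge> 0"
    and Psi_nn: "\<And>z. 0 \<le> Psi z"
    and Psi_cont: "continuous_on (ball 0 1) Psi"
    and nu_cont: "continuous_on (ball 0 1) nu"
    and nu_nn: "\<And>z. cmod z < 1 \<Longrightarrow> 0 \<le> nu z"
    and bound: "\<And>z. cmod z < 1 \<Longrightarrow> ennreal ((nu z)^2)
         \<le> ennreal C * (\<integral>\<^sup>+ w. ennreal (Psi w) * indicator (Sq z ((1 - cmod z)/8)) w \<partial>lborel)"
    and fin: "(\<integral>\<^sup>+ t. (\<integral>\<^sup>+ z. ennreal (Psi z) * indicator (hball0 t) z \<partial>lborel)
                 * ennreal (t powr (-\<alpha>)) * indicator {1..} t \<partial>lborel) < \<infinity>"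
begin

definition A where "A t = (\<integral>\<^sup>+ z. ennreal (Psi z) * indicator (hball0 t) z \<partial>lborel)"
definition F where "F t = A t * ennreal (t powr (-\<alpha>)) * indicator {1..} t"
definition T where "T \<tau> = (\<integral>\<^sup>+ t. F t * indicator {\<tau>..} t \<partial>lborel)"

lemma fin': "integral\<^sup>N lborel F < \<infinity>"
  using fin by (simp add: F_def[abs_def] A_def[abs_def])

lemma A_mono:
  assumes "s \<le> t" shows "A s \<le> A t"
proof -
  have h: "tanh (s/2) \<le> tanh (t/2)" using assms by simp
  have h2: "\<And>y::real. y < tanh (s/2) \<Longrightarrow> y < tanh (t/2)" using h by linarith
  show ?thesis unfolding A_def hball0_eq
    by (intro nn_integral_mono mult_left_mono) (auto simp: indicator_def dest: h2)
qed

definition Psi1 where "Psi1 z = ennreal (Psi z) * indicator (ball 0 1) z"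

lemma Psi1_meas [measurable]: "Psi1 \<in> borel_measurable borel"
proof -
  have m: "(\<lambda>z. indicator (ball (0::complex) 1) z *\<^sub>R Psi z) \<in> borel_measurable borel"
    by (rule borel_measurable_continuous_on_indicator[OF _ Psi_cont]) simp
  have e: "Psi1 = (\<lambda>z. ennreal (indicator (ball (0::complex) 1) z *\<^sub>R Psi z))"
    by (rule ext) (simp add: Psi1_def indicator_def)
  show ?thesis unfolding e using m by measurable
qed

lemma ball_tanh_sub: "ball (0::complex) (tanh (t/2)) \<subseteq> ball 0 1"
  using tanh_real_lt_1[of "t/2"] by auto

lemma A_alt: "A t = (\<integral>\<^sup>+ z. Psi1 z * indicator {p. cmod (snd p) < tanh (fst p / 2)} (t, z) \<partial>lborel)"
  unfolding A_def hball0_eq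
  by (intro nn_integral_cong) (use ball_tanh_sub[of t] in \<open>auto simp: Psi1_def indicator_def\<close>)

lemma A_meas [measurable]: "A \<in> borel_measurable borel"
proof -
  have "(\<lambda>t. \<integral>\<^sup>+ z. Psi1 z * indicator {p. cmod (snd p) < tanh (fst p / 2)} (t, z) \<partial>lborel) \<in> borel_measurable lborel"
  proof (rule lborel.borel_measurable_nn_integral)
    show "(\<lambda>(t, z). Psi1 z * indicator {p. cmod (snd p) < tanh (fst p / 2)} (t, z)) \<in> borel_measurable (lborel \<Otimes>\<^sub>M lborel)"
      unfolding case_prod_unfold by measurable
  qed
  then show ?thesis by (simp add: A_alt[abs_def])
qed

lemma F_meas [measurable]: "F \<in> borel_measurable borel"
  unfolding F_def[abs_def] by measurable

lemma T_le: "T \<tau> \<le> integral\<^sup>N lborel F"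
  unfolding T_def by (intro nn_integral_mono) (auto simp: indicator_def)

lemma T_fin: "T \<tau> < \<infinity>"
  using T_le fin' by (rule le_less_trans)

lemma T_mono: "\<tau>1 \<le> \<tau>2 \<Longrightarrow> T \<tau>2 \<le> T \<tau>1"
  unfolding T_def by (intro nn_integral_mono mult_left_mono) (auto simp: indicator_def)

lemma A_le_T:
  assumes \<tau>: "\<tau> \<ge> 1"
  shows "A \<tau> * ennreal (\<tau> * (2 * \<tau>) powr (-\<alpha>)) \<le> T \<tau>"
proof -
  have "(\<integral>\<^sup>+ t. (A \<tau> * ennreal ((2 * \<tau>) powr (-\<alpha>))) * indicator {\<tau>..2*\<tau>} t \<partial>lborel)
        = A \<tau> * ennreal ((2 * \<tau>) powr (-\<alpha>)) * ennreal \<tau>"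
    using \<tau> by (simp add: nn_integral_cmult_indicator)
  also have "\<dots> = A \<tau> * ennreal (\<tau> * (2 * \<tau>) powr (-\<alpha>))"
    using \<tau> by (simp add: ennreal_mult mult_ac)
  finally have eq: "(\<integral>\<^sup>+ t. (A \<tau> * ennreal ((2 * \<tau>) powr (-\<alpha>))) * indicator {\<tau>..2*\<tau>} t \<partial>lborel)
        = A \<tau> * ennreal (\<tau> * (2 * \<tau>) powr (-\<alpha>))" .
  have "(\<integral>\<^sup>+ t. (A \<tau> * ennreal ((2 * \<tau>) powr (-\<alpha>))) * indicator {\<tau>..2*\<tau>} t \<partial>lborel) \<le> T \<tau>"
    unfolding T_def
  proof (rule nn_integral_mono)
    fix t :: real
    show "A \<tau> * ennreal ((2 * \<tau>) powr - \<alpha>) * indicator {\<tau>..2 * \<tau>} t \<le> F t * indicator {\<tau>..} t"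
    proof (cases "t \<in> {\<tau>..2*\<tau>}")
      case True
      then have t: "\<tau> \<le> t" "t \<le> 2 * \<tau>" by auto
      have "(2 * \<tau>) powr (-\<alpha>) \<le> t powr (-\<alpha>)"
        using t \<tau> alpha by (intro powr_mono2') auto
      then have "A \<tau> * ennreal ((2 * \<tau>) powr - \<alpha>) \<le> A t * ennreal (t powr (-\<alpha>))"
        by (intro mult_mono A_mono t ennreal_leI) auto
      then show ?thesis using t \<tau> by (simp add: F_def)
    qed simp
  qed
  then show ?thesis using eq by simp
qed

lemma A_fin: "A \<tau> < \<infinity>"
proof -
  have "A (max 1 \<tau>) < \<infinity>"
  proof -
    define \<sigma> where "\<sigma> = max 1 \<tau>"
    have s: "\<sigma> \<ge> 1" by (simp add: \<sigma>_def)
    have pos: "\<sigma> * (2 * \<sigma>) powr (-\<alpha>) > 0" using s by simp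
    have "A \<sigma> * ennreal (\<sigma> * (2 * \<sigma>) powr (-\<alpha>)) < \<infinity>"
      using A_le_T[OF s] T_fin by (rule le_less_trans)
    then show ?thesis using pos unfolding \<sigma>_def by (auto simp: ennreal_mult_less_top)
  qed
  moreover have "A \<tau> \<le> A (max 1 \<tau>)" by (rule A_mono) simp
  ultimately show ?thesis by (rule le_less_trans[rotated])
qed

lemma T_small:
  assumes "\<delta> > 0"
  shows "\<exists>N::nat. T (real N) < ennreal \<delta>"
proof -
  define f where "f i t = F t * indicator {real i..} t" for i :: nat and t
  have dec: "decseq f"
  proof (rule antimonoI, rule le_funI)
    fix m n :: nat and t :: real assume "m \<le> n"
    then show "f n t \<le> f m t" by (auto simp: f_def indicator_def)
  qed
  have "(\<integral>\<^sup>+ x. (INF i. f i x) \<partial>lborel) = (INF i. integral\<^sup>N lborel (f i))"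
  proof (rule nn_integral_monotone_convergence_INF_decseq[OF dec])
    show "\<And>i. f i \<in> borel_measurable lborel" unfolding f_def by measurable
    show "(\<integral>\<^sup>+ x. f 0 x \<partial>lborel) < \<infinity>"
      using T_fin[of 0] by (simp add: f_def T_def)
  qed
  moreover have "(INF i. f i x) = 0" for x
  proof -
    obtain i :: nat where "x < real i" using reals_Archimedean2 by blast
    then have "f i x = 0" by (simp add: f_def)
    then show ?thesis by (metis (no_types, lifting) INF_lower UNIV_I bot.extremum_uniqueI bot_ennreal)
  qed
  ultimately have "(INF i. integral\<^sup>N lborel (f i)) = 0" by simp
  moreover have "\<And>i. integral\<^sup>N lborel (f i) = T (real i)" by (simp add: f_def[abs_def] T_def)
  ultimately have "(INF i. T (real i)) = 0" by simp
  then have "(INF i. T (real i)) < ennreal \<delta>" using assms by simp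
  then show ?thesis by (simp add: INF_less_iff)
qed

definition Ar where "Ar t = enn2real (A t)"
definition Tr where "Tr t = enn2real (T t)"

lemma A_eq: "A t = ennreal (Ar t)"
  using A_fin[of t] by (simp add: Ar_def ennreal_enn2real_if)

lemma T_eq: "T t = ennreal (Tr t)"
  using T_fin[of t] by (simp add: Tr_def ennreal_enn2real_if)

lemma Ar_nn: "Ar t \<ge> 0" by (simp add: Ar_def)
lemma Tr_nn: "Tr t \<ge> 0" by (simp add: Tr_def)

lemma Tr_mono: "\<tau>1 \<le> \<tau>2 \<Longrightarrow> Tr \<tau>2 \<le> Tr \<tau>1"
  using T_mono[of \<tau>1 \<tau>2] by (simp add: T_eq Tr_nn)

lemma Ar_mono: "s \<le> t \<Longrightarrow> Ar s \<le> Ar t"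
  using A_mono[of s t] by (simp add: A_eq Ar_nn)

lemma Ar_le_T:
  assumes \<tau>: "\<tau> \<ge> 1"
  shows "Ar \<tau> \<le> 2 powr \<alpha> * \<tau> powr (\<alpha> - 1) * Tr \<tau>"
proof -
  have pos: "\<tau> * (2 * \<tau>) powr (-\<alpha>) \<ge> 0" using \<tau> by simp
  have "ennreal (Ar \<tau> * (\<tau> * (2 * \<tau>) powr (-\<alpha>))) \<le> ennreal (Tr \<tau>)"
    using A_le_T[OF \<tau>] pos by (simp add: A_eq T_eq ennreal_mult Ar_nn)
  then have le: "Ar \<tau> * (\<tau> * (2 * \<tau>) powr (-\<alpha>)) \<le> Tr \<tau>"
    using Tr_nn by (simp add: ennreal_le_iff)
  have eq: "\<tau> * (2 * \<tau>) powr (-\<alpha>) * (2 powr \<alpha> * \<tau> powr (\<alpha> - 1)) = 1"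
  proof -
    have e1: "(2*\<tau>) powr (-\<alpha>) = 2 powr (-\<alpha>) * \<tau> powr (-\<alpha>)" using \<tau> by (simp add: powr_mult)
    have e2: "2 powr (-\<alpha>) * 2 powr \<alpha> = (1::real)" by (simp add: powr_add[symmetric])
    have e3: "\<tau> powr (-\<alpha>) * \<tau> powr (\<alpha> - 1) = \<tau> powr (-1)" by (simp add: powr_add[symmetric])
    have e4: "\<tau> * \<tau> powr (-1) = 1" using \<tau> by (simp add: powr_minus)
    have "\<tau> * (2 * \<tau>) powr (-\<alpha>) * (2 powr \<alpha> * \<tau> powr (\<alpha> - 1))
        = (2 powr (-\<alpha>) * 2 powr \<alpha>) * (\<tau> * (\<tau> powr (-\<alpha>) * \<tau> powr (\<alpha> - 1)))"
      unfolding e1 by (simp add: mult_ac)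
    also have "\<dots> = 1" unfolding e2 e3 e4 by simp
    finally show ?thesis .
  qed
  have "Ar \<tau> = Ar \<tau> * (\<tau> * (2 * \<tau>) powr (-\<alpha>)) * (2 powr \<alpha> * \<tau> powr (\<alpha> - 1))"
    using eq by (simp add: mult.assoc)
  also have "\<dots> \<le> Tr \<tau> * (2 powr \<alpha> * \<tau> powr (\<alpha> - 1))"
    by (rule mult_right_mono[OF le]) simp
  finally show ?thesis by (simp add: mult_ac)
qed

lemma Psi_ball_meas: "(\<lambda>x. ennreal (Psi x) * indicator (ball 0 (tanh (t/2))) x) \<in> borel_measurable borel"
proof -
  have "(\<lambda>x. ennreal (Psi x) * indicator (ball 0 (tanh (t/2))) x) = (\<lambda>x. Psi1 x * indicator (ball 0 (tanh (t/2))) x)"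
    using ball_tanh_sub[of t] by (auto simp: Psi1_def indicator_def fun_eq_iff)
  also have "\<dots> \<in> borel_measurable borel" by (intro borel_measurable_times_ennreal Psi1_meas borel_measurable_indicator) simp
  finally show ?thesis .
qed

definition aR where "aR k = enn2real (\<integral>\<^sup>+ w. ennreal (Psi w) * indicator (Rk k) w \<partial>lborel)"

lemma Rk_in_hball: "Rk k \<subseteq> hball0 (real k + 2)"
  by (auto simp: hball0_eq Rk_def)

lemma Rk_int_fin: "(\<integral>\<^sup>+ w. ennreal (Psi w) * indicator (Rk k) w \<partial>lborel) < \<infinity>"
proof -
  have "(\<integral>\<^sup>+ w. ennreal (Psi w) * indicator (Rk k) w \<partial>lborel) \<le> A (real k + 2)"
    unfolding A_def using Rk_in_hball[of k]
    by (intro nn_integral_mono mult_left_mono) (auto simp: indicator_def)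
  then show ?thesis using A_fin by (rule le_less_trans)
qed

lemma aR_eq: "(\<integral>\<^sup>+ w. ennreal (Psi w) * indicator (Rk k) w \<partial>lborel) = ennreal (aR k)"
  using Rk_int_fin[of k] by (simp add: aR_def ennreal_enn2real_if)

lemma aR_nn: "aR k \<ge> 0" by (simp add: aR_def)

lemma nu_t_bound:
  assumes t: "real k \<le> t" "t \<le> real k + 1"
  shows "(nu (hray \<theta> t))^2 \<le> C * aR k"
proof -
  have z: "cmod (hray \<theta> t) < 1" by (rule hray_in)
  have "ennreal ((nu (hray \<theta> t))^2) \<le> ennreal C * (\<integral>\<^sup>+ w. ennreal (Psi w) * indicator (Sq (hray \<theta> t) ((1 - cmod (hray \<theta> t))/8)) w \<partial>lborel)"
    by (rule bound[OF z])
  also have "\<dots> \<le> ennreal C * (\<integral>\<^sup>+ w. ennreal (Psi w) * indicator (Rk k) w \<partial>lborel)"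
    using Sq_in_Rk[OF t, of \<theta>]
    by (intro mult_left_mono nn_integral_mono) (auto simp: indicator_def)
  also have "\<dots> = ennreal (C * aR k)" using C aR_nn by (simp add: aR_eq ennreal_mult)
  finally show ?thesis using C aR_nn by (simp add: ennreal_le_iff)
qed

lemma Rk_meas [measurable]: "Rk k \<in> sets borel"
  unfolding Rk_def by measurable

lemma sum_aR: "(\<Sum>k<n. aR k) \<le> 3 * Ar (real n + 1)"
proof -
  have "ennreal (\<Sum>k<n. aR k) = (\<Sum>k<n. ennreal (aR k))" using aR_nn by simp
  also have "\<dots> = (\<Sum>k<n. \<integral>\<^sup>+ w. Psi1 w * indicator (Rk k) w \<partial>lborel)"
  proof (rule sum.cong[OF refl])
    fix k
    have "Rk k \<subseteq> ball 0 1" using Rk_in_hball[of k] ball_tanh_sub by (auto simp: hball0_eq)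
    then show "ennreal (aR k) = (\<integral>\<^sup>+ w. Psi1 w * indicator (Rk k) w \<partial>lborel)"
      unfolding aR_eq[symmetric] Psi1_def by (intro nn_integral_cong) (auto simp: indicator_def)
  qed
  also have "\<dots> = (\<integral>\<^sup>+ w. (\<Sum>k<n. Psi1 w * indicator (Rk k) w) \<partial>lborel)"
    by (rule nn_integral_sum[symmetric]) measurable
  also have "\<dots> \<le> (\<integral>\<^sup>+ w. 3 * (ennreal (Psi w) * indicator (hball0 (real n + 1)) w) \<partial>lborel)"
  proof (rule nn_integral_mono)
    fix w
    have "(\<Sum>k<n. Psi1 w * indicator (Rk k) w) \<le> (\<Sum>k<n. ennreal (Psi w) * indicator (Rk k) w)"
      by (intro sum_mono) (auto simp: Psi1_def indicator_def)
    also have "\<dots> = (\<Sum>k<n. ennreal (Psi w * indicator (Rk k) w))"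
      by (intro sum.cong) (auto simp: indicator_def)
    also have "\<dots> = ennreal (\<Sum>k<n. Psi w * indicator (Rk k) w)"
      using Psi_nn[of w] by (intro sum_ennreal) auto
    also have "\<dots> = ennreal (Psi w * (\<Sum>k<n. indicator (Rk k) w))" by (simp add: sum_distrib_left)
    also have "\<dots> \<le> ennreal (Psi w * (3 * indicator (ball 0 (tanh ((real n + 1) / 2))) w))"
      by (intro ennreal_leI mult_left_mono Rk_count Psi_nn)
    also have "\<dots> = 3 * (ennreal (Psi w) * indicator (hball0 (real n + 1)) w)"
      using Psi_nn[of w] by (simp add: hball0_eq indicator_def ennreal_mult mult.commute)
    finally show "(\<Sum>k<n. Psi1 w * indicator (Rk k) w) \<le> 3 * (ennreal (Psi w) * indicator (hball0 (real n + 1)) w)" .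
  qed
  also have "\<dots> = 3 * A (real n + 1)"
    unfolding A_def by (rule nn_integral_cmult) (simp add: hball0_eq Psi_ball_meas)
  also have "\<dots> = ennreal (3 * Ar (real n + 1))" by (simp add: A_eq ennreal_mult Ar_nn)
  finally show ?thesis using Ar_nn by (simp add: ennreal_le_iff)
qed

lemma g_cont: "continuous_on UNIV (\<lambda>t. nu (hray \<theta> t))"
  by (rule continuous_on_compose2[OF nu_cont continuous_hray]) (use hray_in in auto)

lemma g_nn: "0 \<le> nu (hray \<theta> t)"
  using nu_nn[OF hray_in] .

lemma g_int: "(\<lambda>t. nu (hray \<theta> t)) integrable_on {a..b}"
  by (rule integrable_continuous_interval, rule continuous_on_subset[OF g_cont]) auto

lemma L_nat: "integral {0..real n} (\<lambda>t. nu (hray \<theta> t)) \<le> (\<Sum>k<n. sqrt (C * aR k))"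
proof (induction n)
  case 0
  then show ?case by simp
next
  case (Suc n)
  have "integral {0..real (Suc n)} (\<lambda>t. nu (hray \<theta> t))
      = integral {0..real n} (\<lambda>t. nu (hray \<theta> t)) + integral {real n..real n + 1} (\<lambda>t. nu (hray \<theta> t))"
    using Henstock_Kurzweil_Integration.integral_combine[where a=0 and c="real n" and b="real n + 1" and f="\<lambda>t. nu (hray \<theta> t)"] g_int by (simp add: add.commute)
  also have "integral {real n..real n + 1} (\<lambda>t. nu (hray \<theta> t)) \<le> integral {real n..real n + 1} (\<lambda>t. sqrt (C * aR n))"
  proof (rule integral_le[OF g_int])
    show "(\<lambda>t. sqrt (C * aR n)) integrable_on {real n..real n + 1}" by (rule integrable_const_ivl)
    fix t assume "t \<in> {real n..real n + 1}"
    then have "(nu (hray \<theta> t))^2 \<le> C * aR n" by (intro nu_t_bound) auto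
    then show "nu (hray \<theta> t) \<le> sqrt (C * aR n)" using g_nn by (intro real_le_rsqrt) auto
  qed
  also have "integral {real n..real n + 1} (\<lambda>t. sqrt (C * aR n)) = sqrt (C * aR n)" by simp
  finally show ?case using Suc.IH by simp
qed

lemma L_nat_sq: "(integral {0..real n} (\<lambda>t. nu (hray \<theta> t)))^2 \<le> real n * (C * (3 * Ar (real n + 1)))"
proof -
  have nn: "0 \<le> integral {0..real n} (\<lambda>t. nu (hray \<theta> t))"
    by (rule integral_nonneg[OF g_int]) (simp add: g_nn)
  have "(integral {0..real n} (\<lambda>t. nu (hray \<theta> t)))^2 \<le> (\<Sum>k<n. sqrt (C * aR k))^2"
    using nn L_nat by (intro power_mono) auto
  also have "\<dots> \<le> (\<Sum>k<n. (sqrt (C * aR k))^2) * card {..<n}"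
    by (rule sum_squared_le_sum_of_squares)
  also have "\<dots> = (\<Sum>k<n. C * aR k) * real n"
    using C aR_nn by (simp add: mult_nonneg_nonneg)
  also have "\<dots> = real n * (C * (\<Sum>k<n. aR k))" by (simp add: sum_distrib_left mult_ac)
  also have "\<dots> \<le> real n * (C * (3 * Ar (real n + 1)))"
    using sum_aR[of n] C by (intro mult_left_mono) auto
  finally show ?thesis .
qed

theorem gen_main: "(\<lambda>\<rho>. integral {0..\<rho>} (\<lambda>t. nu (hray \<theta> t))) \<in> o[at_top](\<lambda>\<rho>. \<rho> powr (\<alpha> / 2))"
proof (rule landau_o.smallI)
  fix \<epsilon> :: real assume \<epsilon>: "\<epsilon> > 0"
  define P where "P = (2::real) powr \<alpha> * 2 powr \<alpha>"
  define K where "K = 3 * C * P + 1"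
  have P: "P \<ge> 0" by (simp add: P_def)
  have "0 \<le> 3 * C * P" using C P by simp
  then have K: "K > 0" by (simp add: K_def)
  define \<delta> where "\<delta> = \<epsilon>^2 / K"
  have \<delta>: "\<delta> > 0" using \<epsilon> K by (simp add: \<delta>_def)
  obtain N :: nat where N: "T (real N) < ennreal \<delta>" using T_small[OF \<delta>] by blast
  then have TN: "Tr (real N) < \<delta>" using Tr_nn[of "real N"] by (simp add: T_eq ennreal_less_iff)
  show "\<forall>\<^sub>F \<rho> in at_top. norm (integral {0..\<rho>} (\<lambda>t. nu (hray \<theta> t))) \<le> \<epsilon> * norm (\<rho> powr (\<alpha> / 2))"
  proof (rule eventually_at_top_linorderI[of "max (real N) 2"])
    fix \<rho> :: real assume \<rho>: "\<rho> \<ge> max (real N) 2"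
    define n where "n = nat \<lceil>\<rho>\<rceil>"
    have n1: "\<rho> \<le> real n" using \<rho> by (simp add: n_def)
    have n2: "real n \<le> \<rho> + 1" using \<rho> by (simp add: n_def)
    have r2: "\<rho> \<ge> 2" and rN: "\<rho> \<ge> real N" using \<rho> by auto
    define L where "L = integral {0..\<rho>} (\<lambda>t. nu (hray \<theta> t))"
    have L0: "0 \<le> L" unfolding L_def by (rule integral_nonneg[OF g_int]) (simp add: g_nn)
    have Ln: "L \<le> integral {0..real n} (\<lambda>t. nu (hray \<theta> t))"
      unfolding L_def using n1 by (intro integral_subset_le g_int) (auto simp: g_nn)
    have "L^2 \<le> (integral {0..real n} (\<lambda>t. nu (hray \<theta> t)))^2"
      using L0 Ln by (intro power_mono) auto
    also have "\<dots> \<le> real n * (C * (3 * Ar (real n + 1)))" by (rule L_nat_sq)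
    also have "\<dots> \<le> (2 * \<rho>) * (C * (3 * (2 powr \<alpha> * (2 * \<rho>) powr (\<alpha> - 1) * \<delta>)))"
    proof (intro mult_mono mult_left_mono)
      show "real n \<le> 2 * \<rho>" using n2 r2 by simp
      have "Ar (real n + 1) \<le> 2 powr \<alpha> * (real n + 1) powr (\<alpha> - 1) * Tr (real n + 1)"
        by (rule Ar_le_T) simp
      also have "\<dots> \<le> 2 powr \<alpha> * (2 * \<rho>) powr (\<alpha> - 1) * \<delta>"
      proof (intro mult_mono)
        show "(real n + 1) powr (\<alpha> - 1) \<le> (2 * \<rho>) powr (\<alpha> - 1)"
          using n2 r2 alpha by (intro powr_mono2) auto
        have "Tr (real n + 1) \<le> Tr (real N)" using n1 rN by (intro Tr_mono) simp
        then show "Tr (real n + 1) \<le> \<delta>" using TN by simp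
      qed (use Tr_nn \<delta> in auto)
      finally show "Ar (real n + 1) \<le> 2 powr \<alpha> * (2 * \<rho>) powr (\<alpha> - 1) * \<delta>" .
    qed (use C Ar_nn \<delta> r2 in auto)
    also have "\<dots> = 3 * C * P * \<delta> * \<rho> powr \<alpha>"
    proof -
      have "(2 * \<rho>) * (2 * \<rho>) powr (\<alpha> - 1) = (2 * \<rho>) powr \<alpha>"
        using r2 by (simp add: powr_mult_base)
      also have "\<dots> = 2 powr \<alpha> * \<rho> powr \<alpha>" using r2 by (simp add: powr_mult)
      finally have e: "(2 * \<rho>) * (2 * \<rho>) powr (\<alpha> - 1) = 2 powr \<alpha> * \<rho> powr \<alpha>" .
      have "(2 * \<rho>) * (C * (3 * (2 powr \<alpha> * (2 * \<rho>) powr (\<alpha> - 1) * \<delta>)))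
          = 3 * C * 2 powr \<alpha> * \<delta> * ((2 * \<rho>) * (2 * \<rho>) powr (\<alpha> - 1))" by (simp add: mult_ac)
      also have "\<dots> = 3 * C * P * \<delta> * \<rho> powr \<alpha>" unfolding e P_def by (simp add: mult_ac)
      finally show ?thesis .
    qed
    also have "\<dots> \<le> K * \<delta> * \<rho> powr \<alpha>"
      using \<delta> C P by (intro mult_right_mono) (auto simp: K_def)
    also have "\<dots> = \<epsilon>^2 * \<rho> powr \<alpha>" using K by (simp add: \<delta>_def)
    also have "\<dots> = (\<epsilon> * \<rho> powr (\<alpha> / 2))^2"
    proof -
      have "\<rho> powr \<alpha> = \<rho> powr (\<alpha>/2) * \<rho> powr (\<alpha>/2)" by (simp add: powr_add[symmetric])
      then show ?thesis by (simp add: power2_eq_square mult_ac)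
    qed
    finally have "L^2 \<le> (\<epsilon> * \<rho> powr (\<alpha> / 2))^2" .
    then have "L \<le> \<epsilon> * \<rho> powr (\<alpha> / 2)"
    proof (rule power2_le_imp_le)
      show "0 \<le> \<epsilon> * \<rho> powr (\<alpha> / 2)" using \<epsilon> by simp
    qed
    then show "norm L \<le> \<epsilon> * norm (\<rho> powr (\<alpha> / 2))" using L0 by simp
  qed
qed

end



lemma lambdaH_pos: "cmod z < 1 \<Longrightarrow> lambdaH z > 0"
  by (simp add: lambdaH_def abs_square_less_1)

lemma lambdaH_nz: "cmod z < 1 \<Longrightarrow> lambdaH z \<noteq> 0"
  using lambdaH_pos[of z] by simp

lemma sq_lt1: "cmod z < 1 \<Longrightarrow> (cmod z)^2 < 1"
  by (simp add: abs_square_less_1)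

lemma cont_lambdaH: "continuous_on (ball 0 1) lambdaH"
  unfolding lambdaH_def[abs_def]
  by (intro continuous_intros) (force dest: sq_lt1)

lemma mobius_ineq:
  "(1 - (cmod w)^2) * (1 - (cmod u)^2) \<le> (cmod (1 - cnj w * u))^2"
proof -
  have e1: "(cmod (1 - cnj w * u))^2 = (1 - (Re w * Re u + Im w * Im u))^2 + (Re w * Im u - Im w * Re u)^2"
    using cmod_power2[of "1 - cnj w * u"] by (simp add: algebra_simps power2_eq_square)
  have e2: "(cmod w)^2 = (Re w)^2 + (Im w)^2" "(cmod u)^2 = (Re u)^2 + (Im u)^2"
    by (simp_all add: cmod_power2)
  have "(1 - (Re w * Re u + Im w * Im u))^2 + (Re w * Im u - Im w * Re u)^2
        - (1 - ((Re w)^2 + (Im w)^2)) * (1 - ((Re u)^2 + (Im u)^2)) = (Re w - Re u)^2 + (Im w - Im u)^2"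
    by (simp add: power2_eq_square algebra_simps)
  moreover have "(Re w - Re u)^2 + (Im w - Im u)^2 \<ge> 0" by simp
  ultimately show ?thesis unfolding e1 e2 by linarith
qed

lemma caseE:
  fixes f :: "complex \<Rightarrow> complex"
  assumes "\<alpha> > 1" and an: "f analytic_on ball 0 1"
    and fin: "(\<integral>\<^sup>+ t. areaE f (hball0 t) * ennreal (t powr (-\<alpha>)) * indicator {1..} t \<partial>lborel) < \<infinity>"
  shows "(\<lambda>\<rho>. integral {0..\<rho>} (\<lambda>t. normHE f (hray \<theta> t))) \<in> o[at_top](\<lambda>\<rho>. \<rho> powr (\<alpha> / 2))"
proof -
  have hf: "f holomorphic_on ball 0 1" using an analytic_imp_holomorphic by blast
  have hd: "deriv f holomorphic_on ball 0 1" by (rule holomorphic_deriv[OF hf]) simp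
  have cd: "continuous_on (ball 0 1) (deriv f)" using hd holomorphic_on_imp_continuous_on by blast
  interpret gen "\<lambda>z. (cmod (deriv f z))^2" "normHE f" \<alpha> 768
  proof
    show "1 < \<alpha>" by fact
    show "continuous_on (ball 0 1) (\<lambda>z. (cmod (deriv f z))\<^sup>2)"
      by (intro continuous_intros cd)
    show "continuous_on (ball 0 1) (normHE f)"
      unfolding normHE_def[abs_def]
      by (intro continuous_intros cd cont_lambdaH) (auto dest: lambdaH_nz)
    show "0 \<le> normHE f z" if "cmod z < 1" for z
      using lambdaH_pos[OF that] by (simp add: normHE_def)
    show "ennreal ((normHE f z)\<^sup>2) \<le> ennreal 768 * (\<integral>\<^sup>+ w. ennreal ((cmod (deriv f w))\<^sup>2) * indicator (Sq z ((1 - cmod z) / 8)) w \<partial>lborel)"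
      if z: "cmod z < 1" for z
    proof -
      have e: "normHE f z = cmod (deriv f z) * (1 - (cmod z)^2) / 2"
        by (simp add: normHE_def lambdaH_def)
      have "(normHE f z)^2 = (cmod (deriv f z) * (1 - (cmod z)^2) / 2)^2"
        by (simp only: e)
      also have "\<dots> = (cmod (deriv f z))^2 * (1 - (cmod z)^2)^2 / 4"
        by (simp only: power_divide power_mult_distrib) simp
      also have "\<dots> \<le> (cmod (deriv f z))^2 * (1 - (cmod z)^2)^2" by simp
      finally have "ennreal ((normHE f z)^2) \<le> ennreal ((cmod (deriv f z))^2 * (1 - (cmod z)^2)^2)"
        by (rule ennreal_leI)
      also have "\<dots> \<le> 768 * (\<integral>\<^sup>+ w. ennreal ((cmod (deriv f w))^2) * indicator (Sq z ((1 - cmod z) / 8)) w \<partial>lborel)"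
        by (rule point_bound[OF hd z])
      finally show ?thesis by simp
    qed
    show "(\<integral>\<^sup>+ t. (\<integral>\<^sup>+ z. ennreal ((cmod (deriv f z))\<^sup>2) * indicator (hball0 t) z \<partial>lborel) * ennreal (t powr - \<alpha>) * indicator {1..} t \<partial>lborel) < \<infinity>"
      using fin by (simp add: areaE_def)
  qed auto
  show ?thesis by (rule gen_main)
qed

lemma caseH:
  fixes f :: "complex \<Rightarrow> complex"
  assumes "\<alpha> > 1" and an: "f analytic_on ball 0 1" and into: "f ` ball 0 1 \<subseteq> ball 0 1"
    and fin: "(\<integral>\<^sup>+ t. areaH f (hball0 t) * ennreal (t powr (-\<alpha>)) * indicator {1..} t \<partial>lborel) < \<infinity>"
  shows "(\<lambda>\<rho>. integral {0..\<rho>} (\<lambda>t. normHH f (hray \<theta> t))) \<in> o[at_top](\<lambda>\<rho>. \<rho> powr (\<alpha> / 2))"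
proof -
  have hf: "f holomorphic_on ball 0 1" using an analytic_imp_holomorphic by blast
  have hd: "deriv f holomorphic_on ball 0 1" by (rule holomorphic_deriv[OF hf]) simp
  have cd: "continuous_on (ball 0 1) (deriv f)" using hd holomorphic_on_imp_continuous_on by blast
  have cf: "continuous_on (ball 0 1) f" using hf holomorphic_on_imp_continuous_on by blast
  have fz: "cmod (f z) < 1" if "cmod z < 1" for z
  proof -
    have "z \<in> ball 0 1" using that by simp
    then have "f z \<in> ball 0 1" using into by blast
    then show ?thesis by simp
  qed
  have clf: "continuous_on (ball 0 1) (\<lambda>z. lambdaH (f z))"
    by (rule continuous_on_compose2[OF cont_lambdaH cf into])
  interpret gen "\<lambda>z. (cmod (deriv f z))^2 * (lambdaH (f z))^2" "normHH f" \<alpha> 768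
  proof
    show "1 < \<alpha>" by fact
    show "continuous_on (ball 0 1) (\<lambda>z. (cmod (deriv f z))\<^sup>2 * (lambdaH (f z))\<^sup>2)"
      by (intro continuous_intros cd clf)
    show "continuous_on (ball 0 1) (normHH f)"
      unfolding normHH_def[abs_def]
      by (intro continuous_intros cd clf cont_lambdaH) (auto dest: lambdaH_nz)
    show "0 \<le> normHH f z" if "cmod z < 1" for z
      using lambdaH_pos[OF that] lambdaH_pos[OF fz[OF that]] by (simp add: normHH_def)
    show "ennreal ((normHH f z)\<^sup>2) \<le> ennreal 768 * (\<integral>\<^sup>+ w. ennreal ((cmod (deriv f w))\<^sup>2 * (lambdaH (f w))\<^sup>2) * indicator (Sq z ((1 - cmod z) / 8)) w \<partial>lborel)"
      if z: "cmod z < 1" for z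
    proof -
      define w where "w = f z"
      have w: "cmod w < 1" using fz[OF z] by (simp add: w_def)
      have aw: "1 - (cmod w)^2 > 0" using sq_lt1[OF w] by simp
      have den: "1 - cnj w * f \<zeta> \<noteq> 0" if "cmod \<zeta> < 1" for \<zeta>
      proof
        assume "1 - cnj w * f \<zeta> = 0"
        then have "cnj w * f \<zeta> = 1" by simp
        then have "cmod w * cmod (f \<zeta>) = 1" by (metis complex_mod_cnj norm_mult norm_one)
        moreover have "cmod w * cmod (f \<zeta>) < 1"
        proof -
          have "cmod w * cmod (f \<zeta>) \<le> cmod (f \<zeta>)" using w by (intro mult_left_le_one_le) auto
          then show ?thesis using fz[OF that] by linarith
        qed
        ultimately show False by simp
      qed
      define a where "a = 1 - (cmod w)^2"
      have a0: "a > 0" using aw by (simp add: a_def)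
      define G where "G \<zeta> = complex_of_real a * deriv f \<zeta> / (1 - cnj w * f \<zeta>)^2" for \<zeta>
      have hG: "G holomorphic_on ball 0 1"
        unfolding G_def[abs_def] by (intro holomorphic_intros hd hf) (auto dest: den)
      have ww: "1 - cnj w * f z = complex_of_real a"
        using complex_norm_square[of w] by (simp add: a_def w_def[symmetric] mult.commute)
      have an0: "complex_of_real a \<noteq> 0" using a0 by simp
      have Gz1: "G z = deriv f z / complex_of_real a"
      proof -
        have "G z = complex_of_real a * deriv f z / (complex_of_real a * complex_of_real a)"
          unfolding G_def ww by (simp add: a_def power2_eq_square)
        also have "\<dots> = deriv f z / complex_of_real a" using an0 by (simp add: field_simps)
        finally show ?thesis .
      qed
      have Gz0: "cmod (G z) = cmod (deriv f z) / a"
        using a0 by (simp add: Gz1 norm_divide)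
      then have Gz: "cmod (G z) = cmod (deriv f z) / (1 - (cmod w)^2)" by (simp add: a_def)
      have "normHH f z = cmod (G z) * (1 - (cmod z)^2)"
        using aw by (simp add: normHH_def lambdaH_def Gz w_def[symmetric] field_simps)
      then have "ennreal ((normHH f z)^2) = ennreal ((cmod (G z))^2 * (1 - (cmod z)^2)^2)"
        by (simp add: power_mult_distrib)
      also have "\<dots> \<le> 768 * (\<integral>\<^sup>+ v. ennreal ((cmod (G v))^2) * indicator (Sq z ((1 - cmod z) / 8)) v \<partial>lborel)"
        by (rule point_bound[OF hG z])
      also have "\<dots> \<le> 768 * (\<integral>\<^sup>+ v. ennreal ((cmod (deriv f v))\<^sup>2 * (lambdaH (f v))\<^sup>2) * indicator (Sq z ((1 - cmod z) / 8)) v \<partial>lborel)"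
      proof (intro mult_left_mono nn_integral_mono)
        fix v
        show "ennreal ((cmod (G v))^2) * indicator (Sq z ((1 - cmod z) / 8)) v
              \<le> ennreal ((cmod (deriv f v))\<^sup>2 * (lambdaH (f v))\<^sup>2) * indicator (Sq z ((1 - cmod z) / 8)) v"
        proof (cases "v \<in> Sq z ((1 - cmod z) / 8)")
          case True
          then have v: "cmod v < 1" using Sq_sub_ball[OF z] by auto
          define u where "u = f v"
          have u: "cmod u < 1" using fz[OF v] by (simp add: u_def)
          have bu: "1 - (cmod u)^2 > 0" using sq_lt1[OF u] by simp
          have D: "(cmod (1 - cnj w * u))^2 > 0" using den[OF v] by (simp add: u_def)
          have mi: "(1 - (cmod w)^2) * (1 - (cmod u)^2) \<le> (cmod (1 - cnj w * u))^2"
            by (rule mobius_ineq)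
          have q: "(1 - (cmod w)^2) / (cmod (1 - cnj w * u))^2 \<le> 2 / (1 - (cmod u)^2)"
          proof -
            have "(1 - (cmod w)^2) * (1 - (cmod u)^2) \<le> 2 * (cmod (1 - cnj w * u))^2"
              using mi D by linarith
            then show ?thesis using D bu by (simp add: field_simps)
          qed
          have "cmod (G v) = a / (cmod (1 - cnj w * u))^2 * cmod (deriv f v)"
            using a0 by (simp add: G_def u_def norm_divide norm_mult norm_power)
          also have "\<dots> \<le> 2 / (1 - (cmod u)^2) * cmod (deriv f v)"
            by (rule mult_right_mono[OF q[folded a_def]]) simp
          also have "\<dots> = cmod (deriv f v) * lambdaH (f v)"
            by (simp add: lambdaH_def u_def)
          finally have "cmod (G v) \<le> cmod (deriv f v) * lambdaH (f v)" .
          then have "(cmod (G v))^2 \<le> (cmod (deriv f v) * lambdaH (f v))^2"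
            by (intro power_mono) auto
          then show ?thesis using True by (simp add: power_mult_distrib ennreal_leI)
        qed simp
      qed simp
      finally show ?thesis by simp
    qed
    show "(\<integral>\<^sup>+ t. (\<integral>\<^sup>+ z. ennreal ((cmod (deriv f z))\<^sup>2 * (lambdaH (f z))\<^sup>2) * indicator (hball0 t) z \<partial>lborel) * ennreal (t powr - \<alpha>) * indicator {1..} t \<partial>lborel) < \<infinity>"
      using fin by (simp add: areaH_def)
  qed (auto intro: mult_nonneg_nonneg)
  show ?thesis by (rule gen_main)
qed

theorem mainTheorem9:
  fixes \<alpha> :: real and f :: "complex \<Rightarrow> complex"
  assumes "\<alpha> > 1"
  shows
    "(f analytic_on ball 0 1 \<and>
      (\<integral>\<^sup>+ t. areaE f (hball0 t) * ennreal (t powr (-\<alpha>)) * indicator {1..} t \<partial>lborel) < \<infinity>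
      \<longrightarrow> (\<forall>\<theta>::real. (\<lambda>\<rho>. integral {0..\<rho>} (\<lambda>t. normHE f (hray \<theta> t)))
                        \<in> o[at_top](\<lambda>\<rho>. \<rho> powr (\<alpha> / 2))))
     \<and>
     (f analytic_on ball 0 1 \<and> f ` ball 0 1 \<subseteq> ball 0 1 \<and>
      (\<integral>\<^sup>+ t. areaH f (hball0 t) * ennreal (t powr (-\<alpha>)) * indicator {1..} t \<partial>lborel) < \<infinity>
      \<longrightarrow> (\<forall>\<theta>::real. (\<lambda>\<rho>. integral {0..\<rho>} (\<lambda>t. normHH f (hray \<theta> t)))
                        \<in> o[at_top](\<lambda>\<rho>. \<rho> powr (\<alpha> / 2))))"
  using caseE[OF assms] caseH[OF assms] by blast


end
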